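(* In the Krylov setting described in the context, assume in addition that $SU_{d+1}$ has full column rank and that its thin QR factor $T_{d+1}$ has positive diagonal. Then $$(SU_d)^\dagger SAU_d = H_d+re_d^T,\qquad (SU_d)^\dagger Sb=\|b\|e_1,$$ so that $f_d^{\mathrm{sk}}=U_d f(H_d+re_d^T)e_1\|b\|$. Moreover, with $\widehat H_d=T_dH_dT_d^{-1}$ and $\widehat t=(h_{d+1,d}/\tau_d)t$, where $\tau_d$ is the $(d,d)$ entry of $T_d$, $$f_d^{\mathrm{sk}}=U_dT_d^{-1} f\big(\widehat H_d+\widehat t e_d^T\big)e_1\|Sb\|.$$ Here $f$ is any function analytic on an open set containing the spectrum of $H_d+re_d^T$.
   Context: Krylov setting: $A\in\mathbb{R}^{n\times n}$, $b\in\mathbb{R}^n\setminus\{0\}$, $\mathcal{K}_j(A,b)=\mathrm{span}\{b,Ab,\dots,A^{j-1}b\}$, and $d\ge 1$ with $\dim\mathcal{K}_{d+1}(A,b)=d+1$. A (truncated, non-orthogonal) Krylov basis $U_{d+1}=[U_d,u_{d+1}]\in\mathbb{R}^{n\times(d+1)}$ has first column $b/\|b\|$, its first $j$ columns span $\mathcal{K}_j(A,b)$ for $j=1,\dots,d+1$, and it satisfies $AU_d=U_dH_d+h_{d+1,d}u_{d+1}e_d^T$ with $H_d\in\mathbb{R}^{d\times d}$ upper Hessenberg and $h_{d+1,d}\neq 0$. $S\in\mathbb{R}^{s\times n}$ is a sketching matrix; $SU_{d+1}=Q_{d+1}T_{d+1}$ is a thin QR decomposition with $Q_{d+1}=[Q_d,q]$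 and $T_{d+1}=\begin{bmatrix}T_d&t\\0^T&\tau_{d+1}\end{bmatrix}$, and $r=h_{d+1,d}T_d^{-1}t$. The sketched FOM approximation is $f_d^{\mathrm{sk}}=U_d f\big((SU_d)^\dagger SAU_d\big)(SU_d)^\dagger Sb$, where $\dagger$ denotes the Moore–Penrose pseudoinverse. $e_j$ is the $j$th identity column; $f(\cdot)$ of a matrix is the standard (Cauchy-integral) matrix function. *)

theory Defs
  imports "HOL-Complex_Analysis.Complex_Analysis" "Jordan_Normal_Form.Jordan_Normal_Form"
begin

unbundle no vec_syntax
unbundle no inner_syntax
no_notation Finite_Cartesian_Product.matrix_vector_mult (infixl \<open>*v\<close> 70)
no_notation Finite_Cartesian_Product.vector_matrix_mult (infixl \<open>v*\<close> 70)
no_notation Finite_Cartesian_Product.matrix_matrix_mult (infixl \<open>**\<close> 70)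

definition vnorm :: "real vec \<Rightarrow> real" where
  "vnorm v = sqrt (v \<bullet> v)"

definition outer :: "'a::times vec \<Rightarrow> 'a vec \<Rightarrow> 'a mat" where
  "outer u v = mat (dim_vec u) (dim_vec v) (\<lambda>(i,j). u $ i * v $ j)"

definition mat_inv :: "'a::field mat \<Rightarrow> 'a mat" where
  "mat_inv M = (THE X. X \<in> carrier_mat (dim_row M) (dim_row M) \<and>
                       M * X = 1\<^sub>m (dim_row M) \<and> X * M = 1\<^sub>m (dim_row M))"

definition pinv :: "real mat \<Rightarrow> real mat" where
  "pinv M = (THE X. X \<in> carrier_mat (dim_col M) (dim_row M) \<and>
                    M * X * M = M \<and> X * M * X = X \<and>
                    transpose_mat (M * X) = M * X \<and> transpose_mat (X * M) = X * M)"

definition take_cols :: "'a mat \<Rightarrow> nat \<Rightarrow> 'a mat" where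
  "take_cols M k = mat (dim_row M) k (\<lambda>(i,j). M $$ (i,j))"

definition col_span :: "real mat \<Rightarrow> real vec set" where
  "col_span M = {M *\<^sub>v c | c. c \<in> carrier_vec (dim_col M)}"

definition krylov_mat :: "real mat \<Rightarrow> real vec \<Rightarrow> nat \<Rightarrow> real mat" where
  "krylov_mat A b j = mat (dim_vec b) j (\<lambda>(i,k). ((A ^\<^sub>m k) *\<^sub>v b) $ i)"

definition krylov :: "real mat \<Rightarrow> real vec \<Rightarrow> nat \<Rightarrow> real vec set" where
  "krylov A b j = col_span (krylov_mat A b j)"

definition cmat :: "real mat \<Rightarrow> complex mat" where
  "cmat M = map_mat complex_of_real M"

definition cvec :: "real vec \<Rightarrow> complex vec" where
  "cvec v = map_vec complex_of_real v"

definition spec :: "complex mat \<Rightarrow> complex set" where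
  "spec M = {z. eigenvalue M z}"

definition resolvent :: "complex \<Rightarrow> complex mat \<Rightarrow> complex mat" where
  "resolvent z M = mat_inv (z \<cdot>\<^sub>m 1\<^sub>m (dim_row M) - M)"

definition admissible_cycle :: "complex set \<Rightarrow> complex mat \<Rightarrow> (real \<Rightarrow> complex) list \<Rightarrow> bool" where
  "admissible_cycle U M gs \<longleftrightarrow>
     (\<forall>g\<in>set gs. valid_path g \<and> pathfinish g = pathstart g \<and> path_image g \<subseteq> U - spec M) \<and>
     (\<forall>z\<in>spec M. (\<Sum>g\<leftarrow>gs. winding_number g z) = 1) \<and>
     (\<forall>z. z \<notin> U \<longrightarrow> (\<Sum>g\<leftarrow>gs. winding_number g z) = 0)"

definition matfun :: "(complex \<Rightarrow> complex) \<Rightarrow> complex mat \<Rightarrow> complex mat" where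
  "matfun f M =
     (let gs = (SOME gs. \<exists>U. open U \<and> spec M \<subseteq> U \<and> f holomorphic_on U \<and> admissible_cycle U M gs)
      in mat (dim_row M) (dim_row M)
           (\<lambda>(i,j). (1 / (2 * pi * \<i>)) *
                    (\<Sum>g\<leftarrow>gs. contour_integral g (\<lambda>z. f z * resolvent z M $$ (i,j)))))"

end

theory Submission
  imports Defs
begin

lemma mat_inv_unique:
  fixes N X :: "'a::field mat"
  assumes N: "N \<in> carrier_mat m m" and X: "X \<in> carrier_mat m m"
    and NX: "N * X = 1\<^sub>m m" and XN: "X * N = 1\<^sub>m m"
  shows "mat_inv N = X"
  unfolding mat_inv_def
proof (rule the_equality)
  show "X \<in> carrier_mat (dim_row N) (dim_row N) \<and> N * X = 1\<^sub>m (dim_row N) \<and> X * N = 1\<^sub>m (dim_row N)"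
    using N X NX XN by auto
next
  fix Y assume Y: "Y \<in> carrier_mat (dim_row N) (dim_row N) \<and> N * Y = 1\<^sub>m (dim_row N) \<and> Y * N = 1\<^sub>m (dim_row N)"
  hence Y': "Y \<in> carrier_mat m m" "Y * N = 1\<^sub>m m" using N by auto
  have "Y = Y * (N * X)" using NX Y' by simp
  also have "\<dots> = (Y * N) * X" using assoc_mult_mat[OF Y'(1) N X] by simp
  also have "\<dots> = X" using Y' X by simp
  finally show "Y = X" .
qed

lemma mat_inv_adj:
  fixes N :: "'a::field mat"
  assumes N: "N \<in> carrier_mat m m" and d: "det N \<noteq> 0"
  shows "mat_inv N = (1 / det N) \<cdot>\<^sub>m adj_mat N"
proof (rule mat_inv_unique[OF N])
  note a = adj_mat[OF N]
  show "(1 / det N) \<cdot>\<^sub>m adj_mat N \<in> carrier_mat m m" using a by auto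
  show "N * ((1 / det N) \<cdot>\<^sub>m adj_mat N) = 1\<^sub>m m"
    using mult_smult_distrib[OF N a(1)] a d by (auto intro!: eq_matI)
  show "(1 / det N) \<cdot>\<^sub>m adj_mat N * N = 1\<^sub>m m"
    using mult_smult_assoc_mat[OF a(1) N] a d by (auto intro!: eq_matI)
qed

lemma mat_inv_props:
  fixes N :: "'a::field mat"
  assumes N: "N \<in> carrier_mat m m" and d: "det N \<noteq> 0"
  shows "mat_inv N \<in> carrier_mat m m" "N * mat_inv N = 1\<^sub>m m" "mat_inv N * N = 1\<^sub>m m"
proof -
  note a = adj_mat[OF N]
  show "mat_inv N \<in> carrier_mat m m" unfolding mat_inv_adj[OF N d] using a by auto
  show "N * mat_inv N = 1\<^sub>m m" unfolding mat_inv_adj[OF N d]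
    using mult_smult_distrib[OF N a(1)] a d by (auto intro!: eq_matI)
  show "mat_inv N * N = 1\<^sub>m m" unfolding mat_inv_adj[OF N d]
    using mult_smult_assoc_mat[OF a(1) N] a d by (auto intro!: eq_matI)
qed

lemma spec_det:
  fixes M :: "complex mat"
  assumes M: "M \<in> carrier_mat m m"
  shows "z \<in> spec M \<longleftrightarrow> det (z \<cdot>\<^sub>m 1\<^sub>m m - M) = 0"
proof -
  have e: "- char_matrix M z = z \<cdot>\<^sub>m 1\<^sub>m m - M"
    using M unfolding char_matrix_def by (auto intro!: eq_matI)
  show ?thesis unfolding spec_def mem_Collect_eq eigenvalue_root_char_poly[OF M] char_poly_matrix[OF M] e ..
qed

lemma spec_finite:
  fixes M :: "complex mat"
  assumes M: "M \<in> carrier_mat m m"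
  shows "finite (spec M)"
proof -
  have "char_poly M \<noteq> 0" using degree_monic_char_poly[OF M] by auto
  hence "finite {z. poly (char_poly M) z = 0}" by (rule poly_roots_finite)
  moreover have "spec M = {z. poly (char_poly M) z = 0}"
    unfolding spec_def using eigenvalue_root_char_poly[OF M] by auto
  ultimately show ?thesis by simp
qed

lemma spec_similar:
  fixes M P Pi :: "complex mat"
  assumes M: "M \<in> carrier_mat m m" and P: "P \<in> carrier_mat m m" and Pi: "Pi \<in> carrier_mat m m"
    and PPi: "P * Pi = 1\<^sub>m m" and PiP: "Pi * P = 1\<^sub>m m"
  shows "spec (P * M * Pi) = spec M"
proof -
  have PM: "P * M * Pi \<in> carrier_mat m m" using M P Pi by auto
  have "similar_mat (P * M * Pi) M"
    by (rule similar_matI[of _ _ P Pi m], insert M P Pi PM PPi PiP, auto)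
  hence "char_poly (P * M * Pi) = char_poly M" by (rule char_poly_similar)
  thus ?thesis unfolding spec_def using eigenvalue_root_char_poly[OF M] eigenvalue_root_char_poly[OF PM] by auto
qed

lemma resolvent_similar:
  fixes M P Pi :: "complex mat"
  assumes M: "M \<in> carrier_mat m m" and P: "P \<in> carrier_mat m m" and Pi: "Pi \<in> carrier_mat m m"
    and PPi: "P * Pi = 1\<^sub>m m" and PiP: "Pi * P = 1\<^sub>m m" and z: "z \<notin> spec M"
  shows "resolvent z (P * M * Pi) = P * resolvent z M * Pi"
proof -
  define N where "N = z \<cdot>\<^sub>m 1\<^sub>m m - M"
  have N: "N \<in> carrier_mat m m" using M unfolding N_def by auto
  have dN: "det N \<noteq> 0" using spec_det[OF M] z unfolding N_def by auto
  note inv = mat_inv_props[OF N dN]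
  have rM: "resolvent z M = mat_inv N" unfolding resolvent_def N_def using M by simp
  have "P * N = z \<cdot>\<^sub>m P - P * M"
    unfolding N_def using mult_minus_distrib_mat[OF P _ M, of "z \<cdot>\<^sub>m 1\<^sub>m m"] mult_smult_distrib[OF P, of "1\<^sub>m m" m z] P
    by simp
  hence "P * N * Pi = (z \<cdot>\<^sub>m P - P * M) * Pi" by simp
  also have "\<dots> = z \<cdot>\<^sub>m (P * Pi) - P * M * Pi"
    using minus_mult_distrib_mat[OF _ _ Pi, of "z \<cdot>\<^sub>m P" m "P * M"] mult_smult_assoc_mat[OF P Pi] P M by simp
  finally have PNPi: "P * N * Pi = z \<cdot>\<^sub>m 1\<^sub>m m - P * M * Pi" using PPi by simp
  have PM: "P * M * Pi \<in> carrier_mat m m" using P M Pi by auto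
  have r: "resolvent z (P * M * Pi) = mat_inv (P * N * Pi)" unfolding resolvent_def PNPi using PM P by simp
  have X: "P * mat_inv N * Pi \<in> carrier_mat m m" using P inv Pi by auto
  have PNPi_c: "P * N * Pi \<in> carrier_mat m m" using P N Pi by auto
  have 1: "P * N * Pi * (P * mat_inv N * Pi) = 1\<^sub>m m"
  proof -
    have "P * N * Pi * (P * mat_inv N * Pi) = P * N * (Pi * P) * mat_inv N * Pi"
      using P N Pi inv by (simp add: assoc_mult_mat[of _ m m _ m _ m])
    also have "\<dots> = P * (N * mat_inv N) * Pi" using P N Pi inv PiP by (simp add: assoc_mult_mat[of _ m m _ m _ m])
    also have "\<dots> = 1\<^sub>m m" using inv PPi P by simp
    finally show ?thesis .
  qed
  have 2: "P * mat_inv N * Pi * (P * N * Pi) = 1\<^sub>m m"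
  proof -
    have "P * mat_inv N * Pi * (P * N * Pi) = P * mat_inv N * (Pi * P) * N * Pi"
      using P N Pi inv by (simp add: assoc_mult_mat[of _ m m _ m _ m])
    also have "\<dots> = P * (mat_inv N * N) * Pi" using P N Pi inv PiP by (simp add: assoc_mult_mat[of _ m m _ m _ m])
    also have "\<dots> = 1\<^sub>m m" using inv PPi P by simp
    finally show ?thesis .
  qed
  show ?thesis unfolding r rM by (rule mat_inv_unique[OF PNPi_c X 1 2])
qed

lemma det_holomorphic:
  fixes G :: "complex \<Rightarrow> complex mat"
  assumes G: "\<And>z. G z \<in> carrier_mat m m"
    and h: "\<And>i j. i < m \<Longrightarrow> j < m \<Longrightarrow> (\<lambda>z. G z $$ (i,j)) holomorphic_on S"
  shows "(\<lambda>z. det (G z)) holomorphic_on S"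
proof -
  have e: "(\<lambda>z. det (G z)) = (\<lambda>z. \<Sum> p \<in> {p. p permutes {0 ..< m}}. signof p * (\<Prod> i = 0 ..< m. G z $$ (i, p i)))"
    using det_def'[OF G] by auto
  show ?thesis unfolding e
  proof (intro holomorphic_on_sum holomorphic_on_mult holomorphic_on_const holomorphic_on_prod)
    fix p i assume p: "p \<in> {p. p permutes {0 ..< m}}" and i: "i \<in> {0..<m}"
    have "p i < m" using p i permutes_in_image by fastforce
    thus "(\<lambda>z. G z $$ (i, p i)) holomorphic_on S" using h i by auto
  qed
qed

lemma resolvent_entry_holo:
  fixes M :: "complex mat"
  assumes M: "M \<in> carrier_mat m m" and k: "k < m" and l: "l < m"
  shows "(\<lambda>z. resolvent z M $$ (k,l)) holomorphic_on (- spec M)"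
proof -
  define N where "N = (\<lambda>z. z \<cdot>\<^sub>m 1\<^sub>m m - M)"
  have N: "\<And>z. N z \<in> carrier_mat m m" using M unfolding N_def by auto
  have Ne: "\<And>i j. i < m \<Longrightarrow> j < m \<Longrightarrow> N z $$ (i,j) = (if i = j then z else 0) - M $$ (i,j)" for z
    using M unfolding N_def by auto
  have hd: "(\<lambda>z. det (N z)) holomorphic_on (- spec M)"
    by (rule det_holomorphic[OF N], simp add: Ne, case_tac "i = j", simp_all add: holomorphic_intros)
  have hc: "(\<lambda>z. det (mat_delete (N z) l k)) holomorphic_on (- spec M)"
  proof (rule det_holomorphic)
    show "mat_delete (N z) l k \<in> carrier_mat (m - 1) (m - 1)" for z using mat_delete_carrier[OF N] by auto
    fix i j assume i: "i < m - 1" and j: "j < m - 1"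
    have "(\<lambda>z. mat_delete (N z) l k $$ (i,j)) = (\<lambda>z. N z $$ (if i < l then i else Suc i, if j < k then j else Suc j))"
    proof (intro ext)
      fix z show "mat_delete (N z) l k $$ (i,j) = N z $$ (if i < l then i else Suc i, if j < k then j else Suc j)"
        using i j N[of z] unfolding mat_delete_def by auto
    qed
    also have "\<dots> = (\<lambda>z. (if (if i < l then i else Suc i) = (if j < k then j else Suc j) then z else 0)
         - M $$ (if i < l then i else Suc i, if j < k then j else Suc j))"
      using i j by (intro ext Ne) auto
    finally show "(\<lambda>z. mat_delete (N z) l k $$ (i,j)) holomorphic_on (- spec M)"
      by (cases "(if i < l then i else Suc i) = (if j < k then j else Suc j)", simp_all only: if_True if_False, auto intro!: holomorphic_intros)
  qed
  have H1: "(\<lambda>z. ((-1)^(l+k) * det (mat_delete (N z) l k)) / det (N z)) holomorphic_on (- spec M)"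
    by (rule holomorphic_on_divide, rule holomorphic_on_mult[OF holomorphic_on_const hc], rule hd,
        auto simp: spec_det[OF M] N_def)
  have E1: "resolvent z M $$ (k,l) = ((-1)^(l+k) * det (mat_delete (N z) l k)) / det (N z)"
    if z: "z \<in> - spec M" for z
  proof -
    have dN: "det (N z) \<noteq> 0" using z spec_det[OF M] unfolding N_def by auto
    have "resolvent z M = mat_inv (N z)" unfolding resolvent_def N_def using M by simp
    also have "\<dots> = (1 / det (N z)) \<cdot>\<^sub>m adj_mat (N z)" by (rule mat_inv_adj[OF N dN])
    finally show ?thesis using k l N[of z] unfolding adj_mat_def cofactor_def by auto
  qed
  show ?thesis by (rule holomorphic_transform[OF H1], rule E1[symmetric])
qed

lemma finite_uniform_eps:
  assumes "finite E"
    and "\<forall>e\<in>E. \<exists>\<epsilon>>0. \<forall>\<delta>. 0 < \<delta> \<longrightarrow> \<delta> \<le> \<epsilon> \<longrightarrow> P e (\<delta>::real)"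
  shows "\<exists>\<epsilon>>0. \<forall>e\<in>E. \<forall>\<delta>. 0 < \<delta> \<longrightarrow> \<delta> \<le> \<epsilon> \<longrightarrow> P e \<delta>"
  using assms
proof (induction E rule: finite_induct)
  case empty
  then show ?case by (intro exI[of _ 1]) auto
next
  case (insert x F)
  then obtain \<epsilon>1 where e1: "\<epsilon>1 > 0" "\<forall>e\<in>F. \<forall>\<delta>. 0 < \<delta> \<longrightarrow> \<delta> \<le> \<epsilon>1 \<longrightarrow> P e \<delta>" by auto
  from insert obtain \<epsilon>2 where e2: "\<epsilon>2 > 0" "\<forall>\<delta>. 0 < \<delta> \<longrightarrow> \<delta> \<le> \<epsilon>2 \<longrightarrow> P x \<delta>" by auto
  show ?case using e1 e2 by (intro exI[of _ "min \<epsilon>1 \<epsilon>2"]) auto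
qed

lemma admissible_exists:
  fixes M :: "complex mat"
  assumes M: "M \<in> carrier_mat m m" and V: "open V" "spec M \<subseteq> V"
  shows "\<exists>gs. admissible_cycle V M gs"
proof -
  define E where "E = spec M"
  have fE: "finite E" unfolding E_def by (rule spec_finite[OF M])
  define P where "P = (\<lambda>e \<delta>. cball e \<delta> \<subseteq> V \<and> (\<forall>e'\<in>E. e' \<noteq> e \<longrightarrow> 2 * \<delta> < dist e e'))"
  have "\<exists>\<epsilon>>0. \<forall>e\<in>E. \<forall>\<delta>. 0 < \<delta> \<longrightarrow> \<delta> \<le> \<epsilon> \<longrightarrow> P e \<delta>"
  proof (rule finite_uniform_eps[OF fE], intro ballI)
    fix e assume e: "e \<in> E"
    hence "e \<in> V" using V unfolding E_def by auto
    then obtain r where r: "r > 0" "ball e r \<subseteq> V" using V(1) open_contains_ball by blast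
    have "\<exists>\<epsilon>>0. \<forall>e'\<in>E - {e}. \<forall>\<delta>. 0 < \<delta> \<longrightarrow> \<delta> \<le> \<epsilon> \<longrightarrow> 2 * \<delta> < dist e e'"
    proof (rule finite_uniform_eps, use fE in simp, intro ballI)
      fix e' assume "e' \<in> E - {e}"
      hence "dist e e' > 0" by auto
      thus "\<exists>\<epsilon>>0. \<forall>\<delta>. 0 < \<delta> \<longrightarrow> \<delta> \<le> \<epsilon> \<longrightarrow> 2 * \<delta> < dist e e'"
        by (intro exI[of _ "dist e e' / 3"]) auto
    qed
    then obtain \<epsilon>1 where e1: "\<epsilon>1 > 0" "\<forall>e'\<in>E - {e}. \<forall>\<delta>. 0 < \<delta> \<longrightarrow> \<delta> \<le> \<epsilon>1 \<longrightarrow> 2 * \<delta> < dist e e'" by blast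
    show "\<exists>\<epsilon>>0. \<forall>\<delta>. 0 < \<delta> \<longrightarrow> \<delta> \<le> \<epsilon> \<longrightarrow> P e \<delta>"
    proof (intro exI[of _ "min \<epsilon>1 (r/2)"] conjI allI impI)
      show "0 < min \<epsilon>1 (r / 2)" using e1 r by auto
      fix \<delta> assume d: "0 < \<delta>" "\<delta> \<le> min \<epsilon>1 (r / 2)"
      have "cball e \<delta> \<subseteq> ball e r" using d r by auto
      thus "P e \<delta>" unfolding P_def using r e1 d by auto
    qed
  qed
  then obtain \<epsilon> where eps: "\<epsilon> > 0" "\<forall>e\<in>E. cball e \<epsilon> \<subseteq> V" "\<forall>e\<in>E. \<forall>e'\<in>E. e' \<noteq> e \<longrightarrow> 2 * \<epsilon> < dist e e'"
    unfolding P_def by force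
  obtain xs where xs: "set xs = E" "distinct xs" using finite_distinct_list[OF fE] by blast
  define gs where "gs = map (\<lambda>e. circlepath e \<epsilon>) xs"
  have wn0: "winding_number (circlepath e \<epsilon>) z = 0" if "z \<notin> cball e \<epsilon>" for e z
    by (rule winding_number_zero_outside[of _ "cball e \<epsilon>"], use that eps(1) in auto)
  have sumE: "(\<Sum>g\<leftarrow>gs. winding_number g z) = (\<Sum>e\<in>E. winding_number (circlepath e \<epsilon>) z)" for z
    unfolding gs_def map_map o_def using sum_list_distinct_conv_sum_set[OF xs(2)] xs(1) by simp
  have "admissible_cycle V M gs"
    unfolding admissible_cycle_def
  proof (intro conjI ballI allI impI)
    fix g assume "g \<in> set gs"
    then obtain e where e: "e \<in> E" "g = circlepath e \<epsilon>" unfolding gs_def using xs by auto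
    show "valid_path g" "pathfinish g = pathstart g" using e by auto
    show "path_image g \<subseteq> V - spec M"
    proof
      fix x assume "x \<in> path_image g"
      hence x: "dist e x = \<epsilon>" using e eps(1) by (auto simp: path_image_circlepath_nonneg)
      hence "x \<in> cball e \<epsilon>" by auto
      hence "x \<in> V" using eps(2) e by blast
      moreover have "x \<notin> E"
      proof
        assume "x \<in> E"
        show False
        proof (cases "x = e")
          case True thus False using x eps(1) by auto
        next
          case False thus False using eps(3) e \<open>x \<in> E\<close> x eps(1) by fastforce
        qed
      qed
      ultimately show "x \<in> V - spec M" unfolding E_def by auto
    qed
  next
    fix z assume z: "z \<in> spec M"
    hence zE: "z \<in> E" unfolding E_def .
    have "(\<Sum>e\<in>E. winding_number (circlepath e \<epsilon>) z) = winding_number (circlepath z \<epsilon>) z + (\<Sum>e\<in>E - {z}. winding_number (circlepath e \<epsilon>) z)"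
      using sum.remove[OF fE zE] by simp
    also have "(\<Sum>e\<in>E - {z}. winding_number (circlepath e \<epsilon>) z) = 0"
    proof (rule sum.neutral, intro ballI)
      fix e assume "e \<in> E - {z}"
      hence "2 * \<epsilon> < dist e z" using eps(3) zE by auto
      hence "z \<notin> cball e \<epsilon>" using eps(1) by auto
      thus "winding_number (circlepath e \<epsilon>) z = 0" by (rule wn0)
    qed
    also have "winding_number (circlepath z \<epsilon>) z = 1" using eps(1) by (rule winding_number_circlepath_centre)
    finally show "(\<Sum>g\<leftarrow>gs. winding_number g z) = 1" unfolding sumE by simp
  next
    fix z assume z: "z \<notin> V"
    have "(\<Sum>e\<in>E. winding_number (circlepath e \<epsilon>) z) = 0"
    proof (rule sum.neutral, intro ballI)
      fix e assume "e \<in> E"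
      hence "z \<notin> cball e \<epsilon>" using eps(2) z by blast
      thus "winding_number (circlepath e \<epsilon>) z = 0" by (rule wn0)
    qed
    thus "(\<Sum>g\<leftarrow>gs. winding_number g z) = 0" unfolding sumE .
  qed
  thus ?thesis by blast
qed

lemma triple_entry:
  fixes A B C :: "'a::comm_ring_1 mat"
  assumes "A \<in> carrier_mat n n" "B \<in> carrier_mat n n" "C \<in> carrier_mat n n" "i < n" "j < n"
  shows "(A * B * C) $$ (i,j) = (\<Sum>l = 0..<n. \<Sum>k = 0..<n. A $$ (i,k) * B $$ (k,l) * C $$ (l,j))"
  using assms apply (simp add: scalar_prod_def row_def col_def sum_distrib_left mult.assoc)
  by (rule sum.swap)

lemma sum_list_sum_swap:
  "(\<Sum>g\<leftarrow>gs. \<Sum>l\<in>L. h g l) = (\<Sum>l\<in>L. \<Sum>g\<leftarrow>gs. (h g l :: 'a::comm_monoid_add))"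
  by (induction gs) (auto simp: sum.distrib)

lemma matfun_similar:
  fixes M P Pi :: "complex mat"
  assumes M: "M \<in> carrier_mat m m" and P: "P \<in> carrier_mat m m" and Pi: "Pi \<in> carrier_mat m m"
    and PPi: "P * Pi = 1\<^sub>m m" and PiP: "Pi * P = 1\<^sub>m m"
    and fV: "\<exists>V. open V \<and> spec M \<subseteq> V \<and> f holomorphic_on V"
  shows "matfun f (P * M * Pi) = P * matfun f M * Pi"
proof -
  have PM: "P * M * Pi \<in> carrier_mat m m" using P M Pi by auto
  have sp: "spec (P * M * Pi) = spec M" by (rule spec_similar[OF M P Pi PPi PiP])
  have adm: "admissible_cycle U (P * M * Pi) = admissible_cycle U M" for U
    unfolding admissible_cycle_def[abs_def] sp ..
  define gs0 where "gs0 = (SOME gs. \<exists>U. open U \<and> spec M \<subseteq> U \<and> f holomorphic_on U \<and> admissible_cycle U M gs)"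
  have gsP: "(SOME gs. \<exists>U. open U \<and> spec (P * M * Pi) \<subseteq> U \<and> f holomorphic_on U \<and> admissible_cycle U (P * M * Pi) gs) = gs0"
    unfolding gs0_def sp adm ..
  from fV obtain V where V: "open V" "spec M \<subseteq> V" "f holomorphic_on V" by blast
  obtain gsV where "admissible_cycle V M gsV" using admissible_exists[OF M V(1,2)] by blast
  hence "\<exists>gs. \<exists>U. open U \<and> spec M \<subseteq> U \<and> f holomorphic_on U \<and> admissible_cycle U M gs" using V by blast
  hence "\<exists>U. open U \<and> spec M \<subseteq> U \<and> f holomorphic_on U \<and> admissible_cycle U M gs0"
    unfolding gs0_def by (rule someI_ex)
  then obtain U0 where U0: "open U0" "spec M \<subseteq> U0" "f holomorphic_on U0" "admissible_cycle U0 M gs0" by blast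
  define S0 where "S0 = U0 - spec M"
  have S0: "open S0" unfolding S0_def using U0(1) spec_finite[OF M] by (intro open_Diff finite_imp_closed)
  have gprops: "valid_path g" "path_image g \<subseteq> S0" if "g \<in> set gs0" for g
    using U0(4) that unfolding admissible_cycle_def S0_def by auto
  define R where "R = (\<lambda>z k l. resolvent z M $$ (k,l))"
  have integ: "(\<lambda>z. f z * R z k l) contour_integrable_on g" if g: "g \<in> set gs0" and kl: "k < m" "l < m" for g k l
  proof (rule contour_integrable_holomorphic_simple[OF _ S0 gprops[OF g]])
    show "(\<lambda>z. f z * R z k l) holomorphic_on S0" unfolding R_def
      by (rule holomorphic_on_mult, rule holomorphic_on_subset[OF U0(3)], simp add: S0_def,
          rule holomorphic_on_subset[OF resolvent_entry_holo[OF M kl]], auto simp: S0_def)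
  qed
  define F where "F = (\<lambda>g k l. contour_integral g (\<lambda>z. f z * R z k l))"
  define c where "c = 1 / (2 * pi * \<i>)"
  have mfM: "matfun f M = mat m m (\<lambda>(k,l). c * (\<Sum>g\<leftarrow>gs0. F g k l))"
    unfolding matfun_def Let_def gs0_def[symmetric] F_def R_def c_def using M by simp
  have mfP: "matfun f (P * M * Pi) = mat m m (\<lambda>(i,j). c * (\<Sum>g\<leftarrow>gs0. contour_integral g (\<lambda>z. f z * resolvent z (P * M * Pi) $$ (i,j))))"
    unfolding matfun_def Let_def gsP c_def using PM P by simp
  have MF: "matfun f M \<in> carrier_mat m m" unfolding mfM by simp
  show ?thesis
  proof (rule eq_matI)
    show "dim_row (matfun f (P * M * Pi)) = dim_row (P * matfun f M * Pi)" using P unfolding mfP by simp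
    show "dim_col (matfun f (P * M * Pi)) = dim_col (P * matfun f M * Pi)" using Pi unfolding mfP by simp
    fix i j assume "i < dim_row (P * matfun f M * Pi)" "j < dim_col (P * matfun f M * Pi)"
    hence ij: "i < m" "j < m" using P Pi by auto
    have step: "contour_integral g (\<lambda>z. f z * resolvent z (P * M * Pi) $$ (i,j))
       = (\<Sum>l = 0..<m. \<Sum>k = 0..<m. (P $$ (i,k) * Pi $$ (l,j)) * F g k l)" if g: "g \<in> set gs0" for g
    proof -
      have ig: "\<And>k l. k \<in> {0..<m} \<Longrightarrow> l \<in> {0..<m} \<Longrightarrow> (\<lambda>z. f z * R z k l) contour_integrable_on g"
        using integ[OF g] by simp
      have e1: "contour_integral g (\<lambda>z. f z * resolvent z (P * M * Pi) $$ (i,j))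
          = contour_integral g (\<lambda>z. \<Sum>l = 0..<m. \<Sum>k = 0..<m. (P $$ (i,k) * Pi $$ (l,j)) * (f z * R z k l))"
      proof (rule contour_integral_eq)
        fix z assume "z \<in> path_image g"
        hence "z \<in> S0" using gprops[OF g] by blast
        hence z: "z \<notin> spec M" unfolding S0_def by blast
        have dN: "det (z \<cdot>\<^sub>m 1\<^sub>m m - M) \<noteq> 0" using spec_det[OF M] z by blast
        have rM: "resolvent z M = mat_inv (z \<cdot>\<^sub>m 1\<^sub>m m - M)" unfolding resolvent_def using M by simp
        have Rc: "resolvent z M \<in> carrier_mat m m" unfolding rM by (rule mat_inv_props(1)[OF _ dN]) (use M in auto)
        show "f z * resolvent z (P * M * Pi) $$ (i,j) = (\<Sum>l = 0..<m. \<Sum>k = 0..<m. (P $$ (i,k) * Pi $$ (l,j)) * (f z * R z k l))"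
          unfolding resolvent_similar[OF M P Pi PPi PiP z] triple_entry[OF P Rc Pi ij] R_def sum_distrib_left
          by (intro sum.cong refl) (simp only: mult_ac)
      qed
      have e2: "contour_integral g (\<lambda>z. \<Sum>l = 0..<m. \<Sum>k = 0..<m. (P $$ (i,k) * Pi $$ (l,j)) * (f z * R z k l))
         = (\<Sum>l = 0..<m. contour_integral g (\<lambda>z. \<Sum>k = 0..<m. (P $$ (i,k) * Pi $$ (l,j)) * (f z * R z k l)))"
      proof (rule contour_integral_sum)
        fix l assume l: "l \<in> {0..<m}"
        show "(\<lambda>z. \<Sum>k = 0..<m. (P $$ (i,k) * Pi $$ (l,j)) * (f z * R z k l)) contour_integrable_on g"
          by (rule contour_integrable_sum) (auto intro!: contour_integrable_lmul ig l)
      qed simp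
      have e3: "contour_integral g (\<lambda>z. \<Sum>k = 0..<m. (P $$ (i,k) * Pi $$ (l,j)) * (f z * R z k l))
         = (\<Sum>k = 0..<m. (P $$ (i,k) * Pi $$ (l,j)) * F g k l)" if l: "l \<in> {0..<m}" for l
      proof -
        have "contour_integral g (\<lambda>z. \<Sum>k = 0..<m. (P $$ (i,k) * Pi $$ (l,j)) * (f z * R z k l))
          = (\<Sum>k = 0..<m. contour_integral g (\<lambda>z. (P $$ (i,k) * Pi $$ (l,j)) * (f z * R z k l)))"
          by (rule contour_integral_sum) (auto intro!: contour_integrable_lmul ig l)
        also have "\<dots> = (\<Sum>k = 0..<m. (P $$ (i,k) * Pi $$ (l,j)) * F g k l)"
        proof (rule sum.cong[OF refl])
          fix k assume k: "k \<in> {0..<m}"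
          show "contour_integral g (\<lambda>z. (P $$ (i,k) * Pi $$ (l,j)) * (f z * R z k l)) = (P $$ (i,k) * Pi $$ (l,j)) * F g k l"
            unfolding F_def by (rule contour_integral_lmul[OF ig[OF k l]])
        qed
        finally show ?thesis .
      qed
      show ?thesis unfolding e1 e2 using e3 by (rule sum.cong[OF refl])
    qed
    have "matfun f (P * M * Pi) $$ (i,j) = c * (\<Sum>g\<leftarrow>gs0. contour_integral g (\<lambda>z. f z * resolvent z (P * M * Pi) $$ (i,j)))"
      unfolding mfP using ij by simp
    also have "(\<Sum>g\<leftarrow>gs0. contour_integral g (\<lambda>z. f z * resolvent z (P * M * Pi) $$ (i,j)))
       = (\<Sum>g\<leftarrow>gs0. \<Sum>l = 0..<m. \<Sum>k = 0..<m. (P $$ (i,k) * Pi $$ (l,j)) * F g k l)"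
      by (rule arg_cong[where f=sum_list], rule map_cong[OF refl], rule step)
    also have "\<dots> = (\<Sum>l = 0..<m. \<Sum>k = 0..<m. \<Sum>g\<leftarrow>gs0. (P $$ (i,k) * Pi $$ (l,j)) * F g k l)"
      by (simp only: sum_list_sum_swap)
    also have "\<dots> = (\<Sum>l = 0..<m. \<Sum>k = 0..<m. (P $$ (i,k) * Pi $$ (l,j)) * (\<Sum>g\<leftarrow>gs0. F g k l))"
      by (simp only: sum_list_const_mult)
    finally have "matfun f (P * M * Pi) $$ (i,j) = c * (\<Sum>l = 0..<m. \<Sum>k = 0..<m. (P $$ (i,k) * Pi $$ (l,j)) * (\<Sum>g\<leftarrow>gs0. F g k l))" .
    also have "\<dots> = (\<Sum>l = 0..<m. \<Sum>k = 0..<m. P $$ (i,k) * (c * (\<Sum>g\<leftarrow>gs0. F g k l)) * Pi $$ (l,j))"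
      unfolding sum_distrib_left by (intro sum.cong refl) (simp only: mult_ac)
    also have "\<dots> = (P * matfun f M * Pi) $$ (i,j)"
      unfolding triple_entry[OF P MF Pi ij] by (intro sum.cong refl) (simp add: mfM)
    finally show "matfun f (P * M * Pi) $$ (i,j) = (P * matfun f M * Pi) $$ (i,j)" .
  qed
qed

lemma pinv_eq:
  fixes A0 Y :: "real mat"
  assumes A0: "A0 \<in> carrier_mat s d" and Y: "Y \<in> carrier_mat d s"
    and YA: "Y * A0 = 1\<^sub>m d" and sym: "transpose_mat (A0 * Y) = A0 * Y"
  shows "pinv A0 = Y"
  unfolding pinv_def
proof (rule the_equality)
  have AYA: "A0 * Y * A0 = A0" using assoc_mult_mat[OF A0 Y A0] YA A0 by simp
  have YAY: "Y * A0 * Y = Y" using YA Y by simp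
  show "Y \<in> carrier_mat (dim_col A0) (dim_row A0) \<and> A0 * Y * A0 = A0 \<and> Y * A0 * Y = Y \<and>
        transpose_mat (A0 * Y) = A0 * Y \<and> transpose_mat (Y * A0) = Y * A0"
    using A0 Y AYA YAY sym YA by auto
next
  fix X assume XX: "X \<in> carrier_mat (dim_col A0) (dim_row A0) \<and> A0 * X * A0 = A0 \<and> X * A0 * X = X \<and>
        transpose_mat (A0 * X) = A0 * X \<and> transpose_mat (X * A0) = X * A0"
  hence X: "X \<in> carrier_mat d s" and AXA: "A0 * X * A0 = A0" and symX: "transpose_mat (A0 * X) = A0 * X"
    using A0 by auto
  have XA: "X * A0 = 1\<^sub>m d"
  proof -
    have "Y * (A0 * X * A0) = Y * A0" using AXA by simp
    moreover have "Y * (A0 * X * A0) = (Y * A0) * X * A0"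
      using A0 X Y by (simp add: assoc_mult_mat[of _ d s _ d _ s] assoc_mult_mat[of _ d s _ s _ d])
    ultimately show ?thesis using YA X A0 by simp
  qed
  have AYA: "A0 * Y * A0 = A0" using assoc_mult_mat[OF A0 Y A0] YA A0 by simp
  have AX: "A0 * X = A0 * Y"
  proof -
    have "A0 * X = (A0 * Y * A0) * X" using AYA by simp
    also have "\<dots> = (A0 * Y) * (A0 * X)" by (rule assoc_mult_mat) (use A0 X Y in auto)
    also have "\<dots> = transpose_mat (A0 * Y) * transpose_mat (A0 * X)" using sym symX by simp
    also have "\<dots> = transpose_mat (A0 * X * (A0 * Y))"
      using transpose_mult[of "A0 * X" s s "A0 * Y" s] A0 X Y by simp
    also have "A0 * X * (A0 * Y) = (A0 * X * A0) * Y" by (rule assoc_mult_mat[symmetric]) (use A0 X Y in auto)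
    also have "\<dots> = A0 * Y" using AXA by simp
    finally show ?thesis using sym by simp
  qed
  have "X = (Y * A0) * X" using YA X by simp
  also have "\<dots> = Y * (A0 * X)" using A0 X Y by (simp add: assoc_mult_mat)
  also have "\<dots> = Y * (A0 * Y)" using AX by simp
  also have "\<dots> = (Y * A0) * Y" using A0 X Y by (simp add: assoc_mult_mat)
  also have "\<dots> = Y" using YA Y by simp
  finally show "X = Y" .
qed

lemma outer_carrier[simp]: "outer u v \<in> carrier_mat (dim_vec u) (dim_vec v)"
  unfolding outer_def by simp

lemma outer_dims[simp]: "dim_row (outer u v) = dim_vec u" "dim_col (outer u v) = dim_vec v"
  unfolding outer_def by simp_all

lemma mult_outer:
  fixes A :: "'a::comm_ring_1 mat"
  assumes A: "A \<in> carrier_mat r (dim_vec u)"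
  shows "A * outer u v = outer (A *\<^sub>v u) v"
  by (rule eq_matI, insert A, auto simp: outer_def scalar_prod_def sum_distrib_left row_def col_def mult_ac)

lemma outer_mult:
  fixes B :: "'a::comm_ring_1 mat"
  assumes B: "B \<in> carrier_mat (dim_vec v) c"
  shows "outer u v * B = outer u (transpose_mat B *\<^sub>v v)"
  by (rule eq_matI, insert B, auto simp: outer_def scalar_prod_def sum_distrib_left row_def col_def mult_ac)

lemma smult_outer: "k \<cdot>\<^sub>m outer u v = outer (k \<cdot>\<^sub>v u) (v :: 'a::comm_ring_1 vec)"
  by (rule eq_matI, auto simp: outer_def mult_ac)

lemma col_take_cols: "j < k \<Longrightarrow> col (take_cols M k) j = col M j"
  unfolding take_cols_def col_def by (auto intro!: eq_vecI)

lemma take_cols_carrier[simp]: "M \<in> carrier_mat r c \<Longrightarrow> take_cols M k \<in> carrier_mat r k"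
  unfolding take_cols_def by auto

lemma prod_list_pos: "(\<forall>x\<in>set xs. (x::real) > 0) \<Longrightarrow> prod_list xs > 0"
  by (induction xs) auto

lemma mat_vec_unit:
  fixes A :: "'a::comm_ring_1 mat"
  assumes A: "A \<in> carrier_mat r c" and j: "j < c"
  shows "A *\<^sub>v unit_vec c j = col A j"
  by (rule eq_vecI, insert A j, auto simp: scalar_prod_right_unit)

lemma vnorm_pos:
  assumes b: "b \<in> carrier_vec n" "b \<noteq> 0\<^sub>v n"
  shows "vnorm b > 0"
proof -
  have ge: "b \<bullet> b = (\<Sum>i = 0..<n. b $ i * b $ i)" using b by (simp add: scalar_prod_def)
  have "b \<bullet> b \<noteq> 0"
  proof
    assume "b \<bullet> b = 0"
    hence "\<forall>i\<in>{0..<n}. b $ i * b $ i = 0" unfolding ge by (subst (asm) sum_nonneg_eq_0_iff) auto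
    hence "b = 0\<^sub>v n" using b by (auto intro!: eq_vecI)
    thus False using b by simp
  qed
  moreover have "b \<bullet> b \<ge> 0" unfolding ge by (auto intro!: sum_nonneg)
  ultimately show ?thesis unfolding vnorm_def by simp
qed

lemma matfun_carrier: "matfun f M \<in> carrier_mat (dim_row M) (dim_row M)"
  unfolding matfun_def Let_def by simp

theorem mainTheorem2:
  fixes n s d :: nat
    and A :: "real mat" and b :: "real vec" and U :: "real mat" and H :: "real mat"
    and h :: real and S :: "real mat" and Q :: "real mat" and T :: "real mat"
    and f :: "complex \<Rightarrow> complex"
  defines "Ud \<equiv> take_cols U d"
    and "u \<equiv> col U d"
    and "Td \<equiv> mat d d (\<lambda>(i,j). T $$ (i,j))"
    and "t \<equiv> vec d (\<lambda>i. T $$ (i, d))"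
    and "ed \<equiv> unit_vec d (d - 1) :: real vec"
    and "e1 \<equiv> unit_vec d 0 :: complex vec"
  defines "r \<equiv> h \<cdot>\<^sub>v (mat_inv Td *\<^sub>v t)"
    and "taud \<equiv> Td $$ (d - 1, d - 1)"
  defines "Hhat \<equiv> Td * H * mat_inv Td"
    and "that \<equiv> (h / taud) \<cdot>\<^sub>v t"
  defines "fsk \<equiv> cmat Ud *\<^sub>v (matfun f (cmat (pinv (S * Ud) * (S * A * Ud))) *\<^sub>v
                              cvec (pinv (S * Ud) *\<^sub>v (S *\<^sub>v b)))"
  assumes A: "A \<in> carrier_mat n n"
    and b: "b \<in> carrier_vec n" "b \<noteq> 0\<^sub>v n"
    and d: "d \<ge> 1"
    and dimK: "\<forall>c \<in> carrier_vec (d+1). krylov_mat A b (d+1) *\<^sub>v c = 0\<^sub>v n \<longrightarrow> c = 0\<^sub>v (d+1)"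
    and U: "U \<in> carrier_mat n (d+1)"
    and U1: "col U 0 = (1 / vnorm b) \<cdot>\<^sub>v b"
    and Uspan: "\<forall>j \<in> {1..d+1}. col_span (take_cols U j) = krylov A b j"
    and H: "H \<in> carrier_mat d d"
    and Hhess: "\<forall>i<d. \<forall>j<d. j + 1 < i \<longrightarrow> H $$ (i,j) = 0"
    and h: "h \<noteq> 0"
    and arnoldi: "A * Ud = Ud * H + h \<cdot>\<^sub>m outer u ed"
    and S: "S \<in> carrier_mat s n"
    and fullrank: "\<forall>c \<in> carrier_vec (d+1). (S * U) *\<^sub>v c = 0\<^sub>v s \<longrightarrow> c = 0\<^sub>v (d+1)"
    and Q: "Q \<in> carrier_mat s (d+1)" "transpose_mat Q * Q = 1\<^sub>m (d+1)"
    and T: "T \<in> carrier_mat (d+1) (d+1)" "upper_triangular T"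
    and Tpos: "\<forall>i<d+1. T $$ (i,i) > 0"
    and QR: "S * U = Q * T"
    and f: "\<exists>V. open V \<and> spec (cmat (H + outer r ed)) \<subseteq> V \<and> f holomorphic_on V"
  shows "pinv (S * Ud) * (S * A * Ud) = H + outer r ed
       \<and> pinv (S * Ud) *\<^sub>v (S *\<^sub>v b) = vnorm b \<cdot>\<^sub>v unit_vec d 0
       \<and> fsk = of_real (vnorm b) \<cdot>\<^sub>v (cmat Ud *\<^sub>v (matfun f (cmat (H + outer r ed)) *\<^sub>v e1))
       \<and> fsk = of_real (vnorm (S *\<^sub>v b)) \<cdot>\<^sub>v
                (cmat (Ud * mat_inv Td) *\<^sub>v (matfun f (cmat (Hhat + outer that ed)) *\<^sub>v e1))"
proof -
  have Ud: "Ud \<in> carrier_mat n d" unfolding Ud_def using U by simp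
  have Td: "Td \<in> carrier_mat d d" unfolding Td_def by simp
  have tc: "t \<in> carrier_vec d" unfolding t_def by simp
  have edc: "ed \<in> carrier_vec d" unfolding ed_def by simp
  define Qd where "Qd = take_cols Q d"
  define q where "q = col Q d"
  have Qd: "Qd \<in> carrier_mat s d" unfolding Qd_def by (rule take_cols_carrier[OF Q(1)])
  have drQ: "dim_row Q = s" using Q(1) by (rule carrier_matD)
  have drU: "dim_row U = n" using U by (rule carrier_matD)
  have qc: "q \<in> carrier_vec s" unfolding q_def carrier_vec_def using drQ by simp
  have uc: "u \<in> carrier_vec n" unfolding u_def carrier_vec_def using drU by simp
  have QQ: "col Q i \<bullet> col Q j = (if i = j then 1 else 0)" if "i < d+1" "j < d+1" for i j
  proof -
    have "(transpose_mat Q * Q) $$ (i,j) = 1\<^sub>m (d+1) $$ (i,j)" using Q(2) by simp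
    thus ?thesis using that Q(1) by simp
  qed
  have QdQd: "transpose_mat Qd * Qd = 1\<^sub>m d"
  proof (rule eq_matI)
    fix i j assume "i < dim_row (1\<^sub>m d :: real mat)" "j < dim_col (1\<^sub>m d :: real mat)"
    hence ij: "i < d" "j < d" by auto
    have "(transpose_mat Qd * Qd) $$ (i,j) = col Qd i \<bullet> col Qd j" using Qd ij by simp
    also have "\<dots> = col Q i \<bullet> col Q j" using ij by (simp add: Qd_def col_take_cols)
    also have "\<dots> = 1\<^sub>m d $$ (i,j)" using QQ[of i j] ij by simp
    finally show "(transpose_mat Qd * Qd) $$ (i,j) = 1\<^sub>m d $$ (i,j)" .
  qed (use Qd in auto)
  have Qdq: "transpose_mat Qd *\<^sub>v q = 0\<^sub>v d"
  proof (rule eq_vecI)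
    fix i assume "i < dim_vec (0\<^sub>v d :: real vec)"
    hence i: "i < d" by auto
    have "(transpose_mat Qd *\<^sub>v q) $ i = col Qd i \<bullet> q" using Qd i by simp
    also have "\<dots> = col Q i \<bullet> col Q d" using i by (simp add: Qd_def q_def col_take_cols)
    also have "\<dots> = 0" using QQ[of i d] i by simp
    finally show "(transpose_mat Qd *\<^sub>v q) $ i = 0\<^sub>v d $ i" using i by simp
  qed (use Qd in auto)
  have upT: "T $$ (i,j) = 0" if "j < i" "i < d+1" for i j
    using T(2) that carrier_matD[OF T(1)] unfolding upper_triangular_def by auto
  have A0eq: "S * Ud = Qd * Td"
  proof (rule eq_matI)
    fix i j assume "i < dim_row (Qd * Td)" "j < dim_col (Qd * Td)"
    hence ij: "i < s" "j < d" using Qd Td by auto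
    have "(S * Ud) $$ (i,j) = row S i \<bullet> col Ud j" using S Ud ij by simp
    also have "\<dots> = row S i \<bullet> col U j" using ij by (simp add: Ud_def col_take_cols)
    also have "\<dots> = (S * U) $$ (i,j)" using S U ij by simp
    also have "\<dots> = (Q * T) $$ (i,j)" by (simp only: QR)
    also have "\<dots> = (\<Sum>k = 0..<Suc d. Q $$ (i,k) * T $$ (k,j))" using Q(1) T(1) ij by (simp add: scalar_prod_def row_def col_def)
    also have "\<dots> = (\<Sum>k = 0..<d. Q $$ (i,k) * T $$ (k,j))" using upT[of j d] ij by simp
    also have "\<dots> = (Qd * Td) $$ (i,j)" using Qd Td ij drQ by (simp add: Qd_def Td_def take_cols_def scalar_prod_def row_def col_def)
    finally show "(S * Ud) $$ (i,j) = (Qd * Td) $$ (i,j)" .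
  qed (use S Ud Qd Td in auto)
  have Su: "S *\<^sub>v u = Qd *\<^sub>v t + T $$ (d,d) \<cdot>\<^sub>v q"
  proof -
    have "S *\<^sub>v u = col (S * U) d" unfolding u_def using col_mult2[OF S U, of d] by simp
    also have "\<dots> = Q *\<^sub>v col T d" unfolding QR using col_mult2[OF Q(1) T(1), of d] by simp
    also have "\<dots> = Qd *\<^sub>v t + T $$ (d,d) \<cdot>\<^sub>v q"
    proof (rule eq_vecI)
      fix i assume "i < dim_vec (Qd *\<^sub>v t + T $$ (d,d) \<cdot>\<^sub>v q)"
      hence i: "i < s" using Qd qc by auto
      have "(Q *\<^sub>v col T d) $ i = (\<Sum>k = 0..<Suc d. Q $$ (i,k) * T $$ (k,d))"
        using Q(1) T(1) i by (simp add: scalar_prod_def row_def col_def)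
      also have "\<dots> = (\<Sum>k = 0..<d. Q $$ (i,k) * T $$ (k,d)) + Q $$ (i,d) * T $$ (d,d)" by simp
      also have "\<dots> = (Qd *\<^sub>v t + T $$ (d,d) \<cdot>\<^sub>v q) $ i"
        using Qd qc i drQ by (simp add: Qd_def q_def t_def take_cols_def scalar_prod_def row_def col_def mult_ac)
      finally show "(Q *\<^sub>v col T d) $ i = (Qd *\<^sub>v t + T $$ (d,d) \<cdot>\<^sub>v q) $ i" .
    qed (use Q(1) T(1) Qd qc in auto)
    finally show ?thesis .
  qed
  have TdUT: "upper_triangular Td"
    unfolding upper_triangular_def Td_def using upT by auto
  have detTd: "det Td > 0"
  proof -
    have "det Td = prod_list (diag_mat Td)" by (rule det_upper_triangular[OF TdUT Td])
    also have "\<dots> > 0" unfolding diag_mat_def using Td Tpos by (intro prod_list_pos) (auto simp: Td_def)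
    finally show ?thesis .
  qed
  define Tinv where "Tinv = mat_inv Td"
  have Tinv: "Tinv \<in> carrier_mat d d" "Td * Tinv = 1\<^sub>m d" "Tinv * Td = 1\<^sub>m d"
    unfolding Tinv_def using mat_inv_props[OF Td] detTd by auto
  define A0 where "A0 = S * Ud"
  have A0: "A0 \<in> carrier_mat s d" unfolding A0_def using S Ud by auto
  define Y where "Y = Tinv * transpose_mat Qd"
  have Yc: "Y \<in> carrier_mat d s" unfolding Y_def using Tinv Qd by auto
  have QdT: "transpose_mat Qd \<in> carrier_mat d s" using Qd by auto
  have YA: "Y * A0 = 1\<^sub>m d"
  proof -
    have "Y * A0 = Tinv * transpose_mat Qd * (Qd * Td)" unfolding Y_def A0_def A0eq ..
    also have "\<dots> = Tinv * (transpose_mat Qd * (Qd * Td))" by (rule assoc_mult_mat[OF Tinv(1) QdT]) (use Qd Td in auto)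
    also have "transpose_mat Qd * (Qd * Td) = (transpose_mat Qd * Qd) * Td" by (rule assoc_mult_mat[symmetric, OF QdT Qd Td])
    also have "\<dots> = Td" using QdQd Td by simp
    finally show ?thesis using Tinv by simp
  qed
  have AY: "A0 * Y = Qd * transpose_mat Qd"
  proof -
    have "A0 * Y = Qd * Td * (Tinv * transpose_mat Qd)" unfolding Y_def A0_def A0eq ..
    also have "\<dots> = Qd * (Td * (Tinv * transpose_mat Qd))" by (rule assoc_mult_mat[OF Qd Td]) (use Tinv QdT in auto)
    also have "Td * (Tinv * transpose_mat Qd) = (Td * Tinv) * transpose_mat Qd" by (rule assoc_mult_mat[symmetric, OF Td Tinv(1) QdT])
    also have "\<dots> = transpose_mat Qd" using Tinv QdT by simp
    finally show ?thesis .
  qed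
  have symAY: "transpose_mat (A0 * Y) = A0 * Y"
    unfolding AY using transpose_mult[OF Qd QdT] by simp
  have pinvA0: "pinv A0 = Y" by (rule pinv_eq[OF A0 Yc YA symAY])
  have dimu: "dim_vec u = n" using uc by auto
  have dimed: "dim_vec ed = d" using edc by auto
  have Suc': "S *\<^sub>v u \<in> carrier_vec s" using S uc by auto
  have SAU: "S * A * Ud = A0 * H + h \<cdot>\<^sub>m outer (S *\<^sub>v u) ed"
  proof -
    have O: "outer u ed \<in> carrier_mat n d" using dimu dimed by (metis outer_carrier)
    have "S * A * Ud = S * (A * Ud)" by (rule assoc_mult_mat[OF S A Ud])
    also have "\<dots> = S * (Ud * H) + S * (h \<cdot>\<^sub>m outer u ed)" unfolding arnoldi
      by (rule mult_add_distrib_mat[OF S]) (use Ud H O in auto)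
    also have "S * (Ud * H) = A0 * H" unfolding A0_def by (rule assoc_mult_mat[symmetric, OF S Ud H])
    also have "S * (h \<cdot>\<^sub>m outer u ed) = h \<cdot>\<^sub>m (S * outer u ed)" by (rule mult_smult_distrib[OF S O])
    also have "S * outer u ed = outer (S *\<^sub>v u) ed" by (rule mult_outer) (use S dimu in auto)
    finally show ?thesis .
  qed
  have YSu: "Y *\<^sub>v (S *\<^sub>v u) = Tinv *\<^sub>v t"
  proof -
    have Qdt: "Qd *\<^sub>v t \<in> carrier_vec s" using Qd tc by auto
    have "Y *\<^sub>v (S *\<^sub>v u) = Tinv *\<^sub>v (transpose_mat Qd *\<^sub>v (Qd *\<^sub>v t + T $$ (d,d) \<cdot>\<^sub>v q))"
      unfolding Y_def Su by (rule assoc_mult_mat_vec[OF Tinv(1) QdT]) (use Qdt qc in auto)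
    also have "transpose_mat Qd *\<^sub>v (Qd *\<^sub>v t + T $$ (d,d) \<cdot>\<^sub>v q)
        = transpose_mat Qd *\<^sub>v (Qd *\<^sub>v t) + transpose_mat Qd *\<^sub>v (T $$ (d,d) \<cdot>\<^sub>v q)"
      by (rule mult_add_distrib_mat_vec[OF QdT Qdt]) (use qc in auto)
    also have "transpose_mat Qd *\<^sub>v (Qd *\<^sub>v t) = (transpose_mat Qd * Qd) *\<^sub>v t"
      by (rule assoc_mult_mat_vec[symmetric, OF QdT Qd tc])
    also have "\<dots> = t" using QdQd tc by simp
    also have "transpose_mat Qd *\<^sub>v (T $$ (d,d) \<cdot>\<^sub>v q) = T $$ (d,d) \<cdot>\<^sub>v (transpose_mat Qd *\<^sub>v q)"
      by (rule mult_mat_vec[OF QdT qc])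
    also have "\<dots> = 0\<^sub>v d" unfolding Qdq by (auto intro!: eq_vecI)
    finally show ?thesis using tc by simp
  qed
  have part1: "pinv (S * Ud) * (S * A * Ud) = H + outer r ed"
  proof -
    have O2: "outer (S *\<^sub>v u) ed \<in> carrier_mat s d" using Suc' dimed by (metis outer_carrier carrier_vecD)
    have "pinv (S * Ud) * (S * A * Ud) = Y * (A0 * H + h \<cdot>\<^sub>m outer (S *\<^sub>v u) ed)"
      unfolding SAU pinvA0[unfolded A0_def] ..
    also have "\<dots> = Y * (A0 * H) + Y * (h \<cdot>\<^sub>m outer (S *\<^sub>v u) ed)"
      by (rule mult_add_distrib_mat[OF Yc]) (use A0 H O2 in auto)
    also have "Y * (A0 * H) = (Y * A0) * H" by (rule assoc_mult_mat[symmetric, OF Yc A0 H])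
    also have "\<dots> = H" using YA H by simp
    also have "Y * (h \<cdot>\<^sub>m outer (S *\<^sub>v u) ed) = h \<cdot>\<^sub>m (Y * outer (S *\<^sub>v u) ed)"
      by (rule mult_smult_distrib[OF Yc O2])
    also have "Y * outer (S *\<^sub>v u) ed = outer (Tinv *\<^sub>v t) ed"
      using mult_outer[of Y d "S *\<^sub>v u" ed] Yc S YSu by auto
    also have "h \<cdot>\<^sub>m outer (Tinv *\<^sub>v t) ed = outer r ed"
      unfolding smult_outer r_def Tinv_def ..
    finally show ?thesis .
  qed
  define vb where "vb = vnorm b"
  have vb: "vb > 0" unfolding vb_def by (rule vnorm_pos[OF b])
  define e0 where "e0 = (unit_vec d 0 :: real vec)"
  have e0: "e0 \<in> carrier_vec d" unfolding e0_def by simp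
  have bU: "b = vb \<cdot>\<^sub>v col U 0"
    unfolding U1 smult_smult_assoc using vb by (simp add: vb_def)
  have cU0: "col U 0 = Ud *\<^sub>v e0"
    unfolding e0_def using mat_vec_unit[OF Ud, of 0] d by (simp add: Ud_def col_take_cols)
  have Sb: "S *\<^sub>v b = vb \<cdot>\<^sub>v (A0 *\<^sub>v e0)"
  proof -
    have "S *\<^sub>v b = vb \<cdot>\<^sub>v (S *\<^sub>v (Ud *\<^sub>v e0))" unfolding bU cU0
      by (rule mult_mat_vec[OF S]) (use Ud e0 in auto)
    also have "S *\<^sub>v (Ud *\<^sub>v e0) = A0 *\<^sub>v e0" unfolding A0_def by (rule assoc_mult_mat_vec[symmetric, OF S Ud e0])
    finally show ?thesis .
  qed
  have part2: "pinv (S * Ud) *\<^sub>v (S *\<^sub>v b) = vnorm b \<cdot>\<^sub>v unit_vec d 0"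
  proof -
    have "pinv (S * Ud) *\<^sub>v (S *\<^sub>v b) = vb \<cdot>\<^sub>v (Y *\<^sub>v (A0 *\<^sub>v e0))"
      unfolding Sb A0_def[symmetric] pinvA0 by (rule mult_mat_vec[OF Yc]) (use A0 e0 in auto)
    also have "Y *\<^sub>v (A0 *\<^sub>v e0) = (Y * A0) *\<^sub>v e0" by (rule assoc_mult_mat_vec[symmetric, OF Yc A0 e0])
    also have "\<dots> = e0" using YA e0 by simp
    finally show ?thesis unfolding vb_def e0_def .
  qed
  have rc: "r \<in> carrier_vec d" unfolding r_def Tinv_def[symmetric] using Tinv(1) tc by auto
  define F where "F = matfun f (cmat (H + outer r ed))"
  have Fc: "F \<in> carrier_mat d d" unfolding F_def using matfun_carrier[of f "cmat (H + outer r ed)"] H rc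
    by (simp add: cmat_def)
  have cUd: "cmat Ud \<in> carrier_mat n d" unfolding cmat_def using Ud by simp
  have e1: "e1 \<in> carrier_vec d" unfolding e1_def by simp
  have cve: "cvec (vnorm b \<cdot>\<^sub>v unit_vec d 0) = complex_of_real (vnorm b) \<cdot>\<^sub>v e1"
    unfolding cvec_def e1_def by (auto intro!: eq_vecI)
  have part3: "fsk = of_real (vnorm b) \<cdot>\<^sub>v (cmat Ud *\<^sub>v (F *\<^sub>v e1))"
  proof -
    have "fsk = cmat Ud *\<^sub>v (F *\<^sub>v (complex_of_real (vnorm b) \<cdot>\<^sub>v e1))"
      unfolding fsk_def part1 part2 cve F_def ..
    also have "F *\<^sub>v (complex_of_real (vnorm b) \<cdot>\<^sub>v e1) = complex_of_real (vnorm b) \<cdot>\<^sub>v (F *\<^sub>v e1)"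
      by (rule mult_mat_vec[OF Fc e1])
    also have "cmat Ud *\<^sub>v \<dots> = complex_of_real (vnorm b) \<cdot>\<^sub>v (cmat Ud *\<^sub>v (F *\<^sub>v e1))"
      by (rule mult_mat_vec[OF cUd]) (use Fc e1 in auto)
    finally show ?thesis .
  qed
  define M where "M = H + outer r ed"
  have Mc: "M \<in> carrier_mat d d" unfolding M_def using H rc edc by (auto simp: carrier_vecD)
  have taud: "taud > 0" unfolding taud_def Td_def using Tpos d by simp
  have TdTed: "transpose_mat Td *\<^sub>v ed = taud \<cdot>\<^sub>v ed"
  proof (rule eq_vecI)
    fix j assume "j < dim_vec (taud \<cdot>\<^sub>v ed)"
    hence j: "j < d" using edc by auto
    have "(transpose_mat Td *\<^sub>v ed) $ j = col Td j \<bullet> unit_vec d (d - 1)" using Td j by (simp add: ed_def)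
    also have "\<dots> = Td $$ (d - 1, j)" using Td j d by (simp add: scalar_prod_right_unit)
    also have "\<dots> = (taud \<cdot>\<^sub>v ed) $ j"
    proof (cases "j = d - 1")
      case True thus ?thesis using j by (simp add: taud_def ed_def)
    next
      case False
      hence "j < d - 1" using j by auto
      thus ?thesis using upT[of j "d - 1"] j d False by (simp add: Td_def ed_def)
    qed
    finally show "(transpose_mat Td *\<^sub>v ed) $ j = (taud \<cdot>\<^sub>v ed) $ j" .
  qed (use Td edc in auto)
  have TinvTc: "transpose_mat Tinv \<in> carrier_mat d d" "transpose_mat Td \<in> carrier_mat d d" using Tinv Td by auto
  have Tinved: "transpose_mat Tinv *\<^sub>v ed = (1 / taud) \<cdot>\<^sub>v ed"
  proof -
    have "ed = (1 / taud) \<cdot>\<^sub>v (transpose_mat Td *\<^sub>v ed)" unfolding TdTed smult_smult_assoc using taud by simp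
    hence "transpose_mat Tinv *\<^sub>v ed = transpose_mat Tinv *\<^sub>v ((1 / taud) \<cdot>\<^sub>v (transpose_mat Td *\<^sub>v ed))" by simp
    also have "\<dots> = (1 / taud) \<cdot>\<^sub>v (transpose_mat Tinv *\<^sub>v (transpose_mat Td *\<^sub>v ed))"
      by (rule mult_mat_vec[OF TinvTc(1)]) (use TinvTc edc in auto)
    also have "transpose_mat Tinv *\<^sub>v (transpose_mat Td *\<^sub>v ed) = (transpose_mat Tinv * transpose_mat Td) *\<^sub>v ed"
      by (rule assoc_mult_mat_vec[symmetric, OF TinvTc edc])
    also have "transpose_mat Tinv * transpose_mat Td = transpose_mat (Td * Tinv)"
      by (rule transpose_mult[symmetric, OF Td Tinv(1)])
    also have "\<dots> = 1\<^sub>m d" unfolding Tinv(2) by simp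
    finally show ?thesis using edc by simp
  qed
  have Tdr: "Td *\<^sub>v r = h \<cdot>\<^sub>v t"
  proof -
    have "Td *\<^sub>v r = h \<cdot>\<^sub>v (Td *\<^sub>v (Tinv *\<^sub>v t))" unfolding r_def Tinv_def[symmetric]
      by (rule mult_mat_vec[OF Td]) (use Tinv tc in auto)
    also have "Td *\<^sub>v (Tinv *\<^sub>v t) = (Td * Tinv) *\<^sub>v t" by (rule assoc_mult_mat_vec[symmetric, OF Td Tinv(1) tc])
    finally show ?thesis using Tinv(2) tc by simp
  qed
  have SIM: "Hhat + outer that ed = Td * M * Tinv"
  proof -
    have O: "outer r ed \<in> carrier_mat d d" using rc edc by (metis outer_carrier carrier_vecD)
    have "Td * M = Td * H + Td * outer r ed" unfolding M_def by (rule mult_add_distrib_mat[OF Td H O])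
    hence "Td * M * Tinv = (Td * H + Td * outer r ed) * Tinv" by simp
    also have "\<dots> = Td * H * Tinv + Td * outer r ed * Tinv"
      by (rule add_mult_distrib_mat) (use Td H O Tinv in auto)
    also have "Td * outer r ed = outer (h \<cdot>\<^sub>v t) ed" using mult_outer[of Td d r ed] Td rc Tdr by auto
    also have "outer (h \<cdot>\<^sub>v t) ed * Tinv = outer (h \<cdot>\<^sub>v t) ((1 / taud) \<cdot>\<^sub>v ed)"
      using outer_mult[of Tinv ed d "h \<cdot>\<^sub>v t"] Tinv edc Tinved by auto
    also have "\<dots> = outer that ed" unfolding that_def outer_def by (auto intro!: eq_matI)
    finally show ?thesis unfolding Hhat_def Tinv_def by simp
  qed
  define P where "P = cmat Td"
  define Pi where "Pi = cmat Tinv"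
  have Pc: "P \<in> carrier_mat d d" unfolding P_def cmat_def using Td by simp
  have Pic: "Pi \<in> carrier_mat d d" unfolding Pi_def cmat_def using Tinv by simp
  have PPi: "P * Pi = 1\<^sub>m d" unfolding P_def Pi_def cmat_def
    by (metis of_real_hom.mat_hom_mult[OF Td Tinv(1)] Tinv(2) of_real_hom.mat_hom_one)
  have PiP: "Pi * P = 1\<^sub>m d" unfolding P_def Pi_def cmat_def
    by (metis of_real_hom.mat_hom_mult[OF Tinv(1) Td] Tinv(3) of_real_hom.mat_hom_one)
  have cM: "cmat M \<in> carrier_mat d d" unfolding cmat_def using Mc by simp
  have cSIM: "cmat (Hhat + outer that ed) = P * cmat M * Pi"
    unfolding SIM P_def Pi_def cmat_def
    by (metis of_real_hom.mat_hom_mult[OF Td Mc] of_real_hom.mat_hom_mult[OF mult_carrier_mat[OF Td Mc] Tinv(1)])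
  have FF: "matfun f (cmat (Hhat + outer that ed)) = P * F * Pi"
    unfolding cSIM F_def M_def[symmetric]
    by (rule matfun_similar[OF cM Pc Pic PPi PiP]) (use f in \<open>simp add: M_def\<close>)
  define t0 where "t0 = T $$ (0,0)"
  have t0: "t0 > 0" unfolding t0_def using Tpos by simp
  have Tde0: "Td *\<^sub>v e0 = t0 \<cdot>\<^sub>v e0"
  proof -
    have "Td *\<^sub>v e0 = col Td 0" unfolding e0_def by (rule mat_vec_unit[OF Td]) (use d in simp)
    also have "\<dots> = t0 \<cdot>\<^sub>v e0"
    proof (rule eq_vecI)
      fix i assume "i < dim_vec (t0 \<cdot>\<^sub>v e0)"
      hence i: "i < d" using e0 by auto
      show "col Td 0 $ i = (t0 \<cdot>\<^sub>v e0) $ i"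
      proof (cases "i = 0")
        case True thus ?thesis using i d by (simp add: Td_def t0_def e0_def)
      next
        case False thus ?thesis using i d upT[of 0 i] by (simp add: Td_def t0_def e0_def)
      qed
    qed (use Td e0 in auto)
    finally show ?thesis .
  qed
  have Tinve0: "Tinv *\<^sub>v e0 = (1 / t0) \<cdot>\<^sub>v e0"
  proof -
    have "e0 = (1 / t0) \<cdot>\<^sub>v (Td *\<^sub>v e0)" unfolding Tde0 smult_smult_assoc using t0 by simp
    hence "Tinv *\<^sub>v e0 = Tinv *\<^sub>v ((1 / t0) \<cdot>\<^sub>v (Td *\<^sub>v e0))" by simp
    also have "\<dots> = (1 / t0) \<cdot>\<^sub>v (Tinv *\<^sub>v (Td *\<^sub>v e0))"
      by (rule mult_mat_vec[OF Tinv(1)]) (use Td e0 in auto)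
    also have "Tinv *\<^sub>v (Td *\<^sub>v e0) = (Tinv * Td) *\<^sub>v e0" by (rule assoc_mult_mat_vec[symmetric, OF Tinv(1) Td e0])
    finally show ?thesis using Tinv(3) e0 by simp
  qed
  have e1e0: "e1 = cvec e0" unfolding e1_def e0_def cvec_def by (auto intro!: eq_vecI)
  have Pie1: "Pi *\<^sub>v e1 = complex_of_real (1 / t0) \<cdot>\<^sub>v e1"
  proof -
    have "Pi *\<^sub>v e1 = cvec (Tinv *\<^sub>v e0)" unfolding e1e0 Pi_def cmat_def cvec_def
      by (rule of_real_hom.mult_mat_vec_hom[symmetric, OF Tinv(1) e0])
    also have "\<dots> = complex_of_real (1 / t0) \<cdot>\<^sub>v e1" unfolding Tinve0 e1e0 cvec_def by (auto intro!: eq_vecI)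
    finally show ?thesis .
  qed
  have vSb: "vnorm (S *\<^sub>v b) = vb * t0"
  proof -
    have Qde0: "Qd *\<^sub>v e0 = col Q 0"
      unfolding e0_def using mat_vec_unit[OF Qd, of 0] d by (simp add: Qd_def col_take_cols)
    have cQ: "col Q 0 \<in> carrier_vec s" unfolding carrier_vec_def using drQ by simp
    have "S *\<^sub>v b = vb \<cdot>\<^sub>v (Qd *\<^sub>v (Td *\<^sub>v e0))" unfolding Sb A0_def A0eq
      using assoc_mult_mat_vec[OF Qd Td e0] by simp
    also have "Qd *\<^sub>v (Td *\<^sub>v e0) = t0 \<cdot>\<^sub>v col Q 0" unfolding Tde0 Qde0[symmetric]
      by (rule mult_mat_vec[OF Qd e0])
    finally have Sb': "S *\<^sub>v b = (vb * t0) \<cdot>\<^sub>v col Q 0" by (simp add: smult_smult_assoc)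
    have "col Q 0 \<bullet> col Q 0 = 1" using QQ[of 0 0] by simp
    hence "(S *\<^sub>v b) \<bullet> (S *\<^sub>v b) = (vb * t0) * (vb * t0)"
      unfolding Sb' using cQ by (simp add: scalar_prod_smult_left scalar_prod_smult_right)
    thus ?thesis unfolding vnorm_def using vb t0 by simp
  qed
  have part4: "fsk = of_real (vnorm (S *\<^sub>v b)) \<cdot>\<^sub>v
                (cmat (Ud * mat_inv Td) *\<^sub>v (matfun f (cmat (Hhat + outer that ed)) *\<^sub>v e1))"
  proof -
    have cUT: "cmat (Ud * mat_inv Td) = cmat Ud * Pi" unfolding Tinv_def[symmetric] Pi_def cmat_def
      by (rule of_real_hom.mat_hom_mult[OF Ud Tinv(1)])
    have Fe: "F *\<^sub>v e1 \<in> carrier_vec d" using Fc e1 by auto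
    have "(P * F * Pi) *\<^sub>v e1 = P *\<^sub>v (F *\<^sub>v (Pi *\<^sub>v e1))"
      using assoc_mult_mat_vec[of "P * F" d d Pi d e1] assoc_mult_mat_vec[OF Pc Fc, of "Pi *\<^sub>v e1"] Pc Fc Pic e1 by auto
    also have "Pi *\<^sub>v e1 = complex_of_real (1 / t0) \<cdot>\<^sub>v e1" by (rule Pie1)
    also have "F *\<^sub>v (complex_of_real (1 / t0) \<cdot>\<^sub>v e1) = complex_of_real (1 / t0) \<cdot>\<^sub>v (F *\<^sub>v e1)"
      by (rule mult_mat_vec[OF Fc e1])
    finally have 1: "(P * F * Pi) *\<^sub>v e1 = P *\<^sub>v (complex_of_real (1 / t0) \<cdot>\<^sub>v (F *\<^sub>v e1))" .
    have w: "complex_of_real (1 / t0) \<cdot>\<^sub>v (F *\<^sub>v e1) \<in> carrier_vec d" using Fe by simp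
    have "(cmat Ud * Pi) *\<^sub>v ((P * F * Pi) *\<^sub>v e1) = cmat Ud *\<^sub>v (Pi *\<^sub>v (P *\<^sub>v (complex_of_real (1 / t0) \<cdot>\<^sub>v (F *\<^sub>v e1))))"
      unfolding 1 by (rule assoc_mult_mat_vec[OF cUd Pic]) (use Pc w in auto)
    also have "Pi *\<^sub>v (P *\<^sub>v (complex_of_real (1 / t0) \<cdot>\<^sub>v (F *\<^sub>v e1))) = complex_of_real (1 / t0) \<cdot>\<^sub>v (F *\<^sub>v e1)"
      using assoc_mult_mat_vec[OF Pic Pc w, symmetric] PiP w by simp
    also have "cmat Ud *\<^sub>v (complex_of_real (1 / t0) \<cdot>\<^sub>v (F *\<^sub>v e1)) = complex_of_real (1 / t0) \<cdot>\<^sub>v (cmat Ud *\<^sub>v (F *\<^sub>v e1))"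
      by (rule mult_mat_vec[OF cUd Fe])
    finally have 2: "(cmat Ud * Pi) *\<^sub>v ((P * F * Pi) *\<^sub>v e1) = complex_of_real (1 / t0) \<cdot>\<^sub>v (cmat Ud *\<^sub>v (F *\<^sub>v e1))" .
    have 3: "complex_of_real (vb * t0) * complex_of_real (1 / t0) = complex_of_real vb"
    proof -
      have "complex_of_real (vb * t0) * complex_of_real (1 / t0) = complex_of_real (vb * t0 * (1 / t0))"
        by (simp only: of_real_mult)
      also have "vb * t0 * (1 / t0) = vb" using t0 by simp
      finally show ?thesis .
    qed
    show ?thesis
      apply (unfold part3 FF cUT 2 vSb smult_smult_assoc)
      apply (fold vb_def)
      apply (unfold 3)
      ..
  qed
  show ?thesis using part1 part2 part3 part4 unfolding F_def by blast
qed

end
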